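(* Let $\mathfrak{A}$ be a $(\circ,\wedge,\mathsf{A})$-algebra and $\theta$ a representation of $\mathfrak{A}$ by partial functions. If $\theta$ is meet complete, then $\theta$ is join complete.
   Context: A $(\circ,\wedge,\mathsf{A})$-algebra is a set with two binary operations $\circ,\wedge$ and one unary operation $\mathsf{A}$. An algebra of partial functions of this signature is a set of partial functions, with base $X$ the union of all their domains and ranges, closed under: composition $f\circ g=\{(x,z)\mid \exists y\,(x,y)\in f,(y,z)\in g\}$; intersection; antidomain $\mathsf{A}(f)=\{(x,x)\mid x\in X, x\notin\mathrm{dom}(f)\}$. A representation by partial functions is an isomorphism onto such an algebra. The order on $\mathfrak{A}$ is $a\le b\iff a\wedge b=a$. A representation $\theta$ is meet complete if for every nonempty $S\subseteq\mathfrak{A}$ such that $\bigwedge S$ exists, $\theta(\bigwedge S)=\bigcap\theta[S]$; it is join complete if for every $S\subseteq\mathfrak{A}$ such that $\bigvee S$ exists, $\theta(\bigvee S)=\bigcup\theta[S]$. *)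

theory Defs
  imports Main
begin

definition base :: "('a \<Rightarrow> ('x \<times> 'x) set) \<Rightarrow> 'x set" where
  "base \<theta> = (\<Union>a. Domain (\<theta> a) \<union> Range (\<theta> a))"

text \<open>Composition f;g = {(x,z). (x,y) in f, (y,z) in g} is relcomp f g (f O g).\<close>
definition rep_pf ::
  "('a \<Rightarrow> 'a \<Rightarrow> 'a) \<Rightarrow> ('a \<Rightarrow> 'a \<Rightarrow> 'a) \<Rightarrow> ('a \<Rightarrow> 'a) \<Rightarrow> ('a \<Rightarrow> ('x \<times> 'x) set) \<Rightarrow> bool" where
  "rep_pf cmp meet antidom \<theta> \<longleftrightarrow>
     inj \<theta> \<and>
     (\<forall>a. single_valued (\<theta> a)) \<and>
     (\<forall>a b. \<theta> (cmp a b) = \<theta> a O \<theta> b) \<and>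
     (\<forall>a b. \<theta> (meet a b) = \<theta> a \<inter> \<theta> b) \<and>
     (\<forall>a. \<theta> (antidom a) = Id_on (base \<theta> - Domain (\<theta> a)))"

definition alg_le :: "('a \<Rightarrow> 'a \<Rightarrow> 'a) \<Rightarrow> 'a \<Rightarrow> 'a \<Rightarrow> bool" where
  "alg_le meet a b \<longleftrightarrow> meet a b = a"

definition is_inf :: "('a \<Rightarrow> 'a \<Rightarrow> 'a) \<Rightarrow> 'a set \<Rightarrow> 'a \<Rightarrow> bool" where
  "is_inf meet S m \<longleftrightarrow> (\<forall>s\<in>S. alg_le meet m s) \<and>
      (\<forall>l. (\<forall>s\<in>S. alg_le meet l s) \<longrightarrow> alg_le meet l m)"

definition is_sup :: "('a \<Rightarrow> 'a \<Rightarrow> 'a) \<Rightarrow> 'a set \<Rightarrow> 'a \<Rightarrow> bool" where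
  "is_sup meet S j \<longleftrightarrow> (\<forall>s\<in>S. alg_le meet s j) \<and>
      (\<forall>u. (\<forall>s\<in>S. alg_le meet s u) \<longrightarrow> alg_le meet j u)"

definition meet_complete :: "('a \<Rightarrow> 'a \<Rightarrow> 'a) \<Rightarrow> ('a \<Rightarrow> ('x \<times> 'x) set) \<Rightarrow> bool" where
  "meet_complete meet \<theta> \<longleftrightarrow>
     (\<forall>S m. S \<noteq> {} \<and> is_inf meet S m \<longrightarrow> \<theta> m = \<Inter> (\<theta> ` S))"

definition join_complete :: "('a \<Rightarrow> 'a \<Rightarrow> 'a) \<Rightarrow> ('a \<Rightarrow> ('x \<times> 'x) set) \<Rightarrow> bool" where
  "join_complete meet \<theta> \<longleftrightarrow>
     (\<forall>S j. is_sup meet S j \<longrightarrow> \<theta> j = \<Union> (\<theta> ` S))"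

end

theory Submission
  imports Defs
begin

lemma le_iff:
  assumes "rep_pf cmp meet antidom \<theta>"
  shows "alg_le meet a b \<longleftrightarrow> \<theta> a \<subseteq> \<theta> b"
proof
  assume "alg_le meet a b"
  then have "\<theta> a = \<theta> a \<inter> \<theta> b" using assms unfolding alg_le_def rep_pf_def by metis
  then show "\<theta> a \<subseteq> \<theta> b" by blast
next
  assume "\<theta> a \<subseteq> \<theta> b"
  then have "\<theta> (meet a b) = \<theta> a" using assms unfolding rep_pf_def by auto
  then show "alg_le meet a b" using assms unfolding alg_le_def rep_pf_def inj_def by blast
qed

lemma restr:
  assumes "rep_pf cmp meet antidom \<theta>"
  shows "\<theta> (cmp (antidom l) j) = {(x,y). (x,y) \<in> \<theta> j \<and> x \<notin> Domain (\<theta> l)}"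
proof -
  have b: "Domain (\<theta> j) \<subseteq> base \<theta>" unfolding base_def by blast
  show ?thesis using assms b unfolding rep_pf_def Id_on_def by auto
qed

theorem mainTheorem2:
  fixes cmp meet :: "'a \<Rightarrow> 'a \<Rightarrow> 'a" and antidom :: "'a \<Rightarrow> 'a"
    and \<theta> :: "'a \<Rightarrow> ('x \<times> 'x) set"
  assumes "rep_pf cmp meet antidom \<theta>"
    and "meet_complete meet \<theta>"
  shows "join_complete meet \<theta>"
  unfolding join_complete_def
proof (intro allI impI)
  fix S j assume sup: "is_sup meet S j"
  note le = le_iff[OF assms(1)]
  note R = restr[OF assms(1)]
  have sv: "\<And>a. single_valued (\<theta> a)" using assms(1) unfolding rep_pf_def by blast
  define z where "z = cmp (antidom j) j"
  have z0: "\<theta> z = {}" unfolding z_def R by auto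
  have upS: "\<And>s. s \<in> S \<Longrightarrow> \<theta> s \<subseteq> \<theta> j" using sup le unfolding is_sup_def by blast
  have upl: "\<And>u. (\<And>s. s \<in> S \<Longrightarrow> \<theta> s \<subseteq> \<theta> u) \<Longrightarrow> \<theta> j \<subseteq> \<theta> u"
    using sup le unfolding is_sup_def by blast
  show "\<theta> j = \<Union> (\<theta> ` S)"
  proof
    show "\<Union> (\<theta> ` S) \<subseteq> \<theta> j" using upS by blast
  next
    show "\<theta> j \<subseteq> \<Union> (\<theta> ` S)"
    proof
      fix p assume p: "p \<in> \<theta> j"
      obtain x y where xy: "p = (x,y)" by (cases p)
      show "p \<in> \<Union> (\<theta> ` S)"
      proof (cases "S = {}")
        case True
        then have "\<theta> j \<subseteq> \<theta> z" using upl by blast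
        then show ?thesis using p z0 by blast
      next
        case False
        define W where "W = (\<lambda>s. cmp (antidom s) j) ` S"
        have inf: "is_inf meet W z"
          unfolding is_inf_def
        proof (intro conjI allI impI ballI)
          fix w assume "w \<in> W" then show "alg_le meet z w" using le z0 by blast
        next
          fix l assume lb: "\<forall>s\<in>W. alg_le meet l s"
          have lw: "\<And>s. s \<in> S \<Longrightarrow> \<theta> l \<subseteq> \<theta> (cmp (antidom s) j)"
            using lb le unfolding W_def by blast
          have "\<theta> j \<subseteq> \<theta> (cmp (antidom l) j)"
          proof (rule upl)
            fix s assume s: "s \<in> S"
            show "\<theta> s \<subseteq> \<theta> (cmp (antidom l) j)"
            proof
              fix q assume q: "q \<in> \<theta> s"
              obtain a b where ab: "q = (a,b)" by (cases q)
              have "a \<notin> Domain (\<theta> l)"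
              proof
                assume "a \<in> Domain (\<theta> l)"
                then obtain c where "(a,c) \<in> \<theta> l" by blast
                then have "(a,c) \<in> \<theta> (cmp (antidom s) j)" using lw[OF s] by blast
                then show False using q ab by (auto simp add: R)
              qed
              then show "q \<in> \<theta> (cmp (antidom l) j)" using q ab upS[OF s] by (auto simp: R)
            qed
          qed
          then have d: "Domain (\<theta> j) \<inter> Domain (\<theta> l) = {}" by (auto simp: R)
          obtain s0 where "s0 \<in> S" using False by blast
          then have "\<theta> l \<subseteq> \<theta> j" using lw by (force simp: R)
          then have "\<theta> l = {}" using d by auto
          then show "alg_le meet l z" using le z0 by blast
        qed
        have "W \<noteq> {}" using False unfolding W_def by blast
        then have "\<theta> z = \<Inter> (\<theta> ` W)" using assms(2) inf unfolding meet_complete_def by blast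
        then obtain s where s: "s \<in> S" and nin: "(x,y) \<notin> \<theta> (cmp (antidom s) j)"
          using z0 p xy unfolding W_def by auto
        then have "x \<in> Domain (\<theta> s)" using p xy by (auto simp: R)
        then obtain y' where y': "(x,y') \<in> \<theta> s" by blast
        then have "(x,y') \<in> \<theta> j" using upS[OF s] by blast
        then have "y' = y" using sv p xy unfolding single_valued_def by blast
        then show ?thesis using y' s xy by blast
      qed
    qed
  qed
qed

end
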